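(* For every integer $b\ge 2$ and every $0<\alpha<1$ there exist $d\in\mathbb{N}$ and Lipschitz functions $g_0,\dots,g_{d-1}\colon\mathbb{S}^1\to\mathbb{R}$ such that the Weierstrass embedding $\Phi=\Phi^{\alpha,b}_{\{g_0,\dots,g_{d-1}\}}\colon\mathbb{S}^1\to\mathbb{R}^d$ is $\alpha$-bi-Hölder, i.e. there are constants $c_1,c_2>0$ with $$c_1|x-y|^\alpha\le\|\Phi(x)-\Phi(y)\|\le c_2|x-y|^\alpha\quad\text{for all } x,y\in[0,1).$$
   Context: $\mathbb{S}^1$ is identified with $\mathbb{R}/\mathbb{Z}$ (points represented in $[0,1)$), and functions on $\mathbb{S}^1$ are $1$-periodic functions on $\mathbb{R}$. For an integer $b\ge2$, $0<\alpha<1$ and a Lipschitz $g\colon\mathbb{S}^1\to\mathbb{R}$, $W_g^{\alpha,b}(x)=\sum_{k=0}^\infty b^{-\alpha k}g(b^kx)$. For a finite collection $\mathcal{G}=\{g_0,\dots,g_{d-1}\}$ of Lipschitz functions on $\mathbb{S}^1$, the Weierstrass embedding is $\Phi^{\alpha,b}_{\mathcal{G}}(x)=(W^{\alpha,b}_{g_0}(x),\dots,W^{\alpha,b}_{g_{d-1}}(x))\in\mathbb{R}^d$. $\|\cdot\|$ is the $\ell^\infty$ norm on $\mathbb{R}^d$. *)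

theory Defs
  imports "HOL-Analysis.Analysis"
begin

text \<open>Functions on the circle S^1 = R/Z are 1-periodic functions on R.\<close>
definition one_periodic :: "(real \<Rightarrow> real) \<Rightarrow> bool" where
  "one_periodic g \<longleftrightarrow> (\<forall>x. g (x + 1) = g x)"

definition circle_lipschitz :: "(real \<Rightarrow> real) \<Rightarrow> bool" where
  "circle_lipschitz g \<longleftrightarrow> one_periodic g \<and> (\<exists>L. L-lipschitz_on UNIV g)"

definition weierstrass :: "real \<Rightarrow> nat \<Rightarrow> (real \<Rightarrow> real) \<Rightarrow> real \<Rightarrow> real" where
  "weierstrass \<alpha> b g x = (\<Sum>k. (real b) powr (- \<alpha> * real k) * g ((real b) ^ k * x))"

definition weierstrass_embedding ::
  "real \<Rightarrow> nat \<Rightarrow> nat \<Rightarrow> (nat \<Rightarrow> real \<Rightarrow> real) \<Rightarrow> real \<Rightarrow> nat \<Rightarrow> real" where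
  "weierstrass_embedding \<alpha> b d gs x = (\<lambda>i. if i < d then weierstrass \<alpha> b (gs i) x else 0)"

definition linf_dist :: "nat \<Rightarrow> (nat \<Rightarrow> real) \<Rightarrow> (nat \<Rightarrow> real) \<Rightarrow> real" where
  "linf_dist d u v = Max (insert 0 ((\<lambda>i. \<bar>u i - v i\<bar>) ` {..<d}))"

definition circle_dist :: "real \<Rightarrow> real \<Rightarrow> real" where
  "circle_dist x y = min (\<bar>x - y\<bar> - real_of_int \<lfloor>\<bar>x - y\<bar>\<rfloor>) (1 - (\<bar>x - y\<bar> - real_of_int \<lfloor>\<bar>x - y\<bar>\<rfloor>))"

end

theory Submission
  imports Defs
begin


lemma rpow_k:
  fixes B :: real assumes "B > 0"
  shows "B powr (- \<alpha> * real k) = (B powr (- \<alpha>)) ^ k"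
  using powr_power[of B "-\<alpha>" k] assms by (simp add: mult.commute)

lemma per_nat:
  assumes "one_periodic g" shows "g (x + real n) = g x"
proof (induction n)
  case 0 then show ?case by simp
next
  case (Suc n)
  have "g (x + real (Suc n)) = g ((x + real n) + 1)" by (simp add: algebra_simps)
  also have "\<dots> = g (x + real n)" using assms unfolding one_periodic_def by blast
  finally show ?case using Suc by simp
qed

lemma W_periodic:
  assumes "one_periodic g"
  shows "weierstrass \<alpha> b g (x + 1) = weierstrass \<alpha> b g x"
proof -
  have "\<And>k. g (real b ^ k * (x + 1)) = g (real b ^ k * x)"
  proof -
    fix k
    have "real b ^ k * (x + 1) = real b ^ k * x + real (b ^ k)" by (simp add: algebra_simps)
    then show "g (real b ^ k * (x + 1)) = g (real b ^ k * x)" using per_nat[OF assms, of "real b ^ k * x" "b ^ k"] by simp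
  qed
  then show ?thesis unfolding weierstrass_def by simp
qed

lemma lifts:
  fixes x y :: real
  assumes "0 \<le> x" "x < 1" "0 \<le> y" "y < 1" "x \<noteq> y"
  shows "0 < circle_dist x y \<and> circle_dist x y \<le> 1/2 \<and>
    (\<exists>a. \<forall>F. one_periodic F \<longrightarrow> \<bar>F x - F y\<bar> = \<bar>F (a + circle_dist x y) - F a\<bar>)"
proof -
  define D where "D = \<bar>x - y\<bar>"
  have D: "0 < D" "D < 1" using assms unfolding D_def by auto
  have fl: "\<lfloor>D\<rfloor> = 0" using D by (simp add: floor_eq_iff)
  have cd: "circle_dist x y = min D (1 - D)" unfolding circle_dist_def D_def[symmetric] fl by simp
  show ?thesis
  proof (cases "D \<le> 1/2")
    case True
    then have e: "circle_dist x y = D" using cd by simp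
    have "\<forall>F. one_periodic F \<longrightarrow> \<bar>F x - F y\<bar> = \<bar>F (min x y + D) - F (min x y)\<bar>"
      unfolding D_def by (cases "x \<le> y") (auto simp: abs_minus_commute)
    then show ?thesis using e D True by auto
  next
    case False
    then have e: "circle_dist x y = 1 - D" using cd by simp
    have "\<forall>F. one_periodic F \<longrightarrow> \<bar>F x - F y\<bar> = \<bar>F (max x y + (1 - D)) - F (max x y)\<bar>"
    proof (intro allI impI)
      fix F :: "real \<Rightarrow> real" assume p: "one_periodic F"
      have "max x y + (1 - D) = min x y + 1" unfolding D_def by auto
      then have "F (max x y + (1 - D)) = F (min x y)" using p unfolding one_periodic_def by metis
      then show "\<bar>F x - F y\<bar> = \<bar>F (max x y + (1 - D)) - F (max x y)\<bar>"
        by (cases "x \<le> y") (auto simp: abs_minus_commute)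
    qed
    then show ?thesis using e D False by auto
  qed
qed



lemma rpow_eq:
  fixes B :: real assumes "B > 0"
  shows "(B powr (- \<alpha>)) ^ n = (1 / B ^ n) powr \<alpha>"
proof -
  have "(B powr (- \<alpha>)) ^ n = B powr (real n * - \<alpha>)" using powr_power[of B "-\<alpha>" n] assms by simp
  also have "\<dots> = (B powr real n) powr (- \<alpha>)" by (simp add: powr_powr)
  also have "\<dots> = (B ^ n) powr (- \<alpha>)" using assms by (simp add: powr_realpow)
  also have "\<dots> = (1 / B ^ n) powr \<alpha>" using assms by (simp add: powr_minus_divide powr_divide)
  finally show ?thesis .
qed

lemma rN_le:
  fixes B \<delta> :: real assumes "B > 0" "\<alpha> > 0" "1 / B ^ n \<le> \<delta>"
  shows "(B powr (- \<alpha>)) ^ n \<le> \<delta> powr \<alpha>"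
  unfolding rpow_eq[OF assms(1)] using assms by (intro powr_mono2) auto

lemma rN_ge:
  fixes B \<delta> :: real assumes "B > 0" "\<alpha> > 0" "\<delta> \<le> 1 / B ^ n" "0 \<le> \<delta>"
  shows "\<delta> powr \<alpha> \<le> (B powr (- \<alpha>)) ^ n"
  unfolding rpow_eq[OF assms(1)] using assms by (intro powr_mono2) auto

lemma N_exists:
  fixes B \<delta> :: real assumes "B > 1" "0 < \<delta>" "\<delta> < 1"
  shows "\<exists>N>0. 1 \<le> B ^ N * \<delta> \<and> B ^ (N - 1) * \<delta> < 1"
proof -
  obtain n where n: "1 / \<delta> < B ^ n" using real_arch_pow[OF assms(1)] by blast
  have ex: "\<exists>n. 1 \<le> B ^ n * \<delta>" using n assms by (intro exI[of _ n]) (simp add: field_simps)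
  define N where "N = (LEAST n. 1 \<le> B ^ n * \<delta>)"
  have N1: "1 \<le> B ^ N * \<delta>" unfolding N_def by (rule LeastI_ex[OF ex])
  have N0: "N > 0" proof (rule ccontr)
    assume "\<not> N > 0" then have "N = 0" by simp
    then show False using N1 assms by simp
  qed
  have "\<not> 1 \<le> B ^ (N - 1) * \<delta>" unfolding N_def
    by (rule not_less_Least) (use N0 N_def in simp)
  then show ?thesis using N0 N1 by auto
qed

lemma S_bound:
  fixes B \<delta> :: real
  assumes B: "B \<ge> 2" and a: "0 < \<alpha>" "\<alpha> < 1" and d: "0 < \<delta>"
    and N: "N > 0" "1 \<le> B ^ N * \<delta>" "B ^ (N - 1) * \<delta> < 1"
  defines "r \<equiv> B powr (- \<alpha>)"
  shows "summable (\<lambda>k. r ^ k * min (B ^ k * \<delta>) 1)"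
    and "(\<Sum>k. r ^ k * min (B ^ k * \<delta>) 1) \<le> (B / (r * B - 1) + 1 / (1 - r)) * r ^ N"
proof -
  have r0: "0 < r" unfolding r_def using B by simp
  have r1: "r < 1" unfolding r_def using B a by (simp add: powr_less_one)
  have rB: "r * B = B powr (1 - \<alpha>)" unfolding r_def using B
    by (simp add: powr_diff powr_minus_divide)
  have rB1: "r * B > 1" unfolding rB using B a powr_less_mono[of 0 "1 - \<alpha>" B] by simp
  define f where "f k = r ^ k * min (B ^ k * \<delta>) 1" for k
  have f0: "0 \<le> f k" for k unfolding f_def using r0 B d by simp
  have fr: "f k \<le> r ^ k" for k unfolding f_def using r0 by (simp add: mult_left_le)
  have sg: "summable (\<lambda>k. r ^ k)" using r0 r1 by (intro summable_geometric) simp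
  show sf: "summable (\<lambda>k. r ^ k * min (B ^ k * \<delta>) 1)"
    using f0 fr by (intro summable_comparison_test'[OF sg]) (auto simp: f_def)
  have sf': "summable f" using sf unfolding f_def .
  have split: "suminf f = (\<Sum>k. f (k + N)) + (\<Sum>k<N. f k)"
    by (rule suminf_split_initial_segment[OF sf'])
  have t1: "(\<Sum>k. f (k + N)) \<le> r ^ N / (1 - r)"
  proof -
    have "(\<Sum>k. f (k + N)) \<le> (\<Sum>k. r ^ N * r ^ k)"
    proof (rule suminf_le)
      show "f (k + N) \<le> r ^ N * r ^ k" for k using fr[of "k + N"] by (simp add: power_add mult.commute)
      show "summable (\<lambda>k. f (k + N))" using sf' by (rule summable_ignore_initial_segment)
      show "summable (\<lambda>k. r ^ N * r ^ k)" using sg by (rule summable_mult)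
    qed
    also have "\<dots> = r ^ N * (1 / (1 - r))"
      using suminf_geometric[of r] r0 r1 suminf_mult[OF sg] by simp
    finally show ?thesis by simp
  qed
  have t2: "(\<Sum>k<N. f k) \<le> r ^ N * B / (r * B - 1)"
  proof -
    have "(\<Sum>k<N. f k) \<le> (\<Sum>k<N. (r * B) ^ k * \<delta>)"
      unfolding f_def by (intro sum_mono) (use r0 in \<open>auto simp: power_mult_distrib mult.assoc intro!: mult_left_mono\<close>)
    also have "\<dots> = \<delta> * ((1 - (r*B) ^ N) / (1 - r * B))"
    proof -
      have "(\<Sum>k<N. (r * B) ^ k * \<delta>) = (\<Sum>k<N. (r * B) ^ k) * \<delta>" by (simp add: sum_distrib_right)
      also have "\<dots> = \<delta> * ((1 - (r*B) ^ N) / (1 - r * B))" using rB1 by (simp add: sum_gp_strict)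
      finally show ?thesis .
    qed
    also have "\<dots> = \<delta> * (((r*B) ^ N - 1) / (r * B - 1))"
      using rB1 by (simp add: field_simps)
    also have "\<dots> \<le> \<delta> * ((r*B) ^ N / (r * B - 1))"
      using rB1 d by (intro mult_left_mono divide_right_mono) auto
    also have "\<dots> = r ^ N * (B ^ N * \<delta>) / (r * B - 1)" by (simp add: power_mult_distrib)
    also have "\<dots> \<le> r ^ N * B / (r * B - 1)"
    proof -
      have "B ^ N * \<delta> = B * (B ^ (N - 1) * \<delta>)" using N(1)
        by (metis mult.assoc power_eq_if neq0_conv)
      also have "\<dots> \<le> B" using N(3) B by (simp add: mult_left_le)
      finally show ?thesis using rB1 r0 by (intro divide_right_mono mult_left_mono) auto
    qed
    finally show ?thesis .
  qed
  show "(\<Sum>k. r ^ k * min (B ^ k * \<delta>) 1) \<le> (B / (r * B - 1) + 1 / (1 - r)) * r ^ N"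
    using split t1 t2 unfolding f_def[symmetric] by (simp add: field_simps)
qed



lemma W_eq:
  assumes "b \<ge> 2"
  shows "weierstrass \<alpha> b g x = (\<Sum>k. (real b powr (- \<alpha>)) ^ k * g (real b ^ k * x))"
  unfolding weierstrass_def using rpow_k[of "real b" \<alpha>] assms by simp

lemma W_summable:
  assumes "b \<ge> 2" "0 < \<alpha>" "\<forall>s. \<bar>g s\<bar> \<le> Mg"
  shows "summable (\<lambda>k. (real b powr (- \<alpha>)) ^ k * g (real b ^ k * x))"
proof -
  define r where "r = real b powr (- \<alpha>)"
  have r0: "0 < r" "r < 1" unfolding r_def using assms by (auto simp: powr_less_one)
  have "summable (\<lambda>k. Mg * r ^ k)" using r0 by (intro summable_mult summable_geometric) simp
  then show ?thesis unfolding r_def[symmetric]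
    by (rule summable_comparison_test'[where N=0]) (use r0 assms in \<open>auto simp: abs_mult intro!: mult_left_mono[of _ _ "r^_", simplified mult.commute]\<close>)
qed

lemma W_upper:
  fixes b :: nat and \<alpha> \<delta> L Mg :: real
  assumes b: "b \<ge> 2" and a: "0 < \<alpha>" "\<alpha> < 1" and d: "0 < \<delta>" "\<delta> < 1" and L: "L \<ge> 0"
    and lip: "\<forall>s t. \<bar>g s - g t\<bar> \<le> L * \<bar>s - t\<bar>" and bd: "\<forall>s. \<bar>g s\<bar> \<le> Mg"
  shows "\<bar>weierstrass \<alpha> b g (x + \<delta>) - weierstrass \<alpha> b g x\<bar>
     \<le> (L + 2 * Mg) * ((real b / (real b powr (- \<alpha>) * real b - 1) + 1 / (1 - real b powr (- \<alpha>))) * \<delta> powr \<alpha>)"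
proof -
  define B where "B = real b"
  define r where "r = B powr (- \<alpha>)"
  have B2: "B \<ge> 2" unfolding B_def using b by simp
  have r0: "0 < r" "r < 1" unfolding r_def using B2 a by (auto simp: powr_less_one)
  have Mg0: "0 \<le> Mg" using bd by (meson abs_ge_zero order_trans)
  obtain N where N: "N > 0" "1 \<le> B ^ N * \<delta>" "B ^ (N - 1) * \<delta> < 1"
    using N_exists[of B \<delta>] B2 d by auto
  note S = S_bound[OF B2 a d(1) N, folded r_def]
  define h where "h k = r ^ k * (g (B ^ k * (x + \<delta>)) - g (B ^ k * x))" for k
  have s1: "summable (\<lambda>k. r ^ k * g (B ^ k * (x + \<delta>)))"
    using W_summable[OF b a(1) bd] unfolding r_def B_def .
  have s2: "summable (\<lambda>k. r ^ k * g (B ^ k * x))"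
    using W_summable[OF b a(1) bd] unfolding r_def B_def .
  have "weierstrass \<alpha> b g (x + \<delta>) - weierstrass \<alpha> b g x = suminf h"
    unfolding W_eq[OF b] B_def[symmetric] r_def[symmetric] h_def
    using suminf_diff[OF s1 s2] by (simp add: right_diff_distrib)
  have hterm: "\<bar>h k\<bar> \<le> (L + 2 * Mg) * (r ^ k * min (B ^ k * \<delta>) 1)" for k
  proof -
    have e: "\<bar>g (B ^ k * (x + \<delta>)) - g (B ^ k * x)\<bar> \<le> (L + 2 * Mg) * min (B ^ k * \<delta>) 1"
    proof (cases "B ^ k * \<delta> \<le> 1")
      case True
      have "\<bar>g (B ^ k * (x + \<delta>)) - g (B ^ k * x)\<bar> \<le> L * \<bar>B ^ k * (x + \<delta>) - B ^ k * x\<bar>" using lip by blast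
      also have "\<dots> = L * (B ^ k * \<delta>)" using B2 d by (simp add: algebra_simps)
      also have "\<dots> \<le> (L + 2 * Mg) * (B ^ k * \<delta>)" using Mg0 B2 d by (intro mult_right_mono) auto
      finally show ?thesis using True by simp
    next
      case False
      have "\<bar>g (B ^ k * (x + \<delta>)) - g (B ^ k * x)\<bar> \<le> 2 * Mg"
        using bd[rule_format, of "B ^ k * (x + \<delta>)"] bd[rule_format, of "B ^ k * x"] by linarith
      then show ?thesis using False L by simp
    qed
    have "\<bar>h k\<bar> = r ^ k * \<bar>g (B ^ k * (x + \<delta>)) - g (B ^ k * x)\<bar>" unfolding h_def using r0 by (simp add: abs_mult)
    also have "\<dots> \<le> r ^ k * ((L + 2 * Mg) * min (B ^ k * \<delta>) 1)" using e r0 by (intro mult_left_mono) auto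
    finally show ?thesis by (simp add: algebra_simps)
  qed
  have sS: "summable (\<lambda>k. (L + 2 * Mg) * (r ^ k * min (B ^ k * \<delta>) 1))" using S(1) by (rule summable_mult)
  have sabs: "summable (\<lambda>k. \<bar>h k\<bar>)"
    by (rule summable_comparison_test'[OF sS]) (use hterm in auto)
  have "\<bar>suminf h\<bar> \<le> (\<Sum>k. \<bar>h k\<bar>)" by (rule summable_rabs[OF sabs])
  also have "\<dots> \<le> (\<Sum>k. (L + 2 * Mg) * (r ^ k * min (B ^ k * \<delta>) 1))"
    by (rule suminf_le[OF hterm sabs sS])
  also have "\<dots> = (L + 2 * Mg) * (\<Sum>k. r ^ k * min (B ^ k * \<delta>) 1)" using suminf_mult[OF S(1)] by simp
  also have "\<dots> \<le> (L + 2 * Mg) * ((B / (r * B - 1) + 1 / (1 - r)) * r ^ N)"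
    using S(2) L Mg0 by (intro mult_left_mono) auto
  also have "\<dots> \<le> (L + 2 * Mg) * ((B / (r * B - 1) + 1 / (1 - r)) * \<delta> powr \<alpha>)"
  proof -
    have rB1: "r * B > 1" unfolding r_def using B2 a powr_less_mono[of 0 "1 - \<alpha>" B]
      by (simp add: powr_diff powr_minus_divide)
    have C0: "0 \<le> B / (r * B - 1) + 1 / (1 - r)" using rB1 r0 B2 by simp
    have "r ^ N \<le> \<delta> powr \<alpha>" unfolding r_def
      by (rule rN_le) (use B2 a N d in \<open>auto simp: field_simps\<close>)
    then show ?thesis using C0 L Mg0 by (intro mult_left_mono) auto
  qed
  finally show ?thesis
    using \<open>weierstrass \<alpha> b g (x + \<delta>) - weierstrass \<alpha> b g x = suminf h\<close> unfolding r_def B_def by simp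
qed



definition pfun :: "real \<Rightarrow> real \<Rightarrow> real" where
  "pfun \<eta> w = \<eta> * of_int \<lfloor>w\<rfloor> + min \<eta> (w - of_int \<lfloor>w\<rfloor>)"

definition Gf :: "real \<Rightarrow> real \<Rightarrow> real \<Rightarrow> real" where
  "Gf \<eta> c z = pfun \<eta> (z - c) - \<eta> * (z - c)"

lemma pfun_mono_lip:
  assumes "0 < \<eta>" "\<eta> \<le> 1/2" "w \<le> w'"
  shows "pfun \<eta> w \<le> pfun \<eta> w'" "pfun \<eta> w' - pfun \<eta> w \<le> w' - w"
proof -
  define n where "n = \<lfloor>w\<rfloor>"
  define n' where "n' = \<lfloor>w'\<rfloor>"
  have nn: "n \<le> n'" unfolding n_def n'_def using assms by (simp add: floor_mono)
  have f: "0 \<le> w - n" "w - n < 1" unfolding n_def by linarith+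
  have f': "0 \<le> w' - n'" "w' - n' < 1" unfolding n'_def by linarith+
  have p: "pfun \<eta> w = \<eta> * n + min \<eta> (w - n)" unfolding pfun_def n_def by simp
  have p': "pfun \<eta> w' = \<eta> * n' + min \<eta> (w' - n')" unfolding pfun_def n'_def by simp
  have "pfun \<eta> w \<le> pfun \<eta> w' \<and> pfun \<eta> w' - pfun \<eta> w \<le> w' - w"
  proof (cases "n = n'")
    case True
    then show ?thesis unfolding p p' using assms by auto
  next
    case False
    then have n1: "real_of_int n + 1 \<le> real_of_int n'" using nn by linarith
    have a: "\<eta> * n + \<eta> \<le> \<eta> * n'" using n1 assms by (metis distrib_left mult.right_neutral mult_left_mono less_imp_le)
    have b: "\<eta> * (real_of_int n' - n) \<le> (real_of_int n' - n) - (1 - \<eta>)"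
    proof -
      have "(1 - \<eta>) * 1 \<le> (1 - \<eta>) * (real_of_int n' - n)" using n1 assms by (intro mult_left_mono) auto
      then show ?thesis by (simp add: algebra_simps)
    qed
    show ?thesis unfolding p p' using a b f f' assms by (auto simp: algebra_simps min_def)
  qed
  then show "pfun \<eta> w \<le> pfun \<eta> w'" "pfun \<eta> w' - pfun \<eta> w \<le> w' - w" by auto
qed

lemma pfun_shift: "pfun \<eta> (w + 1) = pfun \<eta> w + \<eta>"
  unfolding pfun_def by (simp add: algebra_simps)

lemma pfun_int:
  assumes "0 < \<eta>" "\<eta> < 1"
  shows "pfun \<eta> (of_int q) = \<eta> * q" "pfun \<eta> (of_int q + \<eta>) = \<eta> * q + \<eta>"
proof -
  show "pfun \<eta> (of_int q) = \<eta> * q" unfolding pfun_def using assms by simp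
  have "\<lfloor>of_int q + \<eta>\<rfloor> = q" using assms by (simp add: floor_eq_iff)
  then show "pfun \<eta> (of_int q + \<eta>) = \<eta> * q + \<eta>" unfolding pfun_def by simp
qed

lemma Gf_range:
  assumes "0 < \<eta>" "\<eta> \<le> 1/2"
  shows "0 \<le> Gf \<eta> c z" "Gf \<eta> c z \<le> \<eta>"
proof -
  define w where "w = z - c"
  define f where "f = w - of_int \<lfloor>w\<rfloor>"
  have f: "0 \<le> f" "f < 1" unfolding f_def by linarith+
  have e: "Gf \<eta> c z = min \<eta> f - \<eta> * f" unfolding Gf_def pfun_def w_def[symmetric] f_def
    by (simp add: algebra_simps)
  have "\<eta> * f \<le> \<eta>" using f assms by (simp add: mult_left_le)
  moreover have "\<eta> * f \<le> f" using f assms by (simp add: mult_left_le_one_le)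
  moreover have "0 \<le> \<eta> * f" using f assms by simp
  ultimately show "0 \<le> Gf \<eta> c z" "Gf \<eta> c z \<le> \<eta>" unfolding e by (auto simp: min_def)
qed

lemma Gf_periodic: "one_periodic (Gf \<eta> c)"
  unfolding one_periodic_def Gf_def
proof
  fix x
  have "x + 1 - c = (x - c) + 1" by simp
  then show "pfun \<eta> (x + 1 - c) - \<eta> * (x + 1 - c) = pfun \<eta> (x - c) - \<eta> * (x - c)"
    by (simp only: pfun_shift) (simp add: algebra_simps)
qed

lemma Gf_lip:
  assumes "0 < \<eta>" "\<eta> \<le> 1/2"
  shows "\<bar>Gf \<eta> c s - Gf \<eta> c t\<bar> \<le> 2 * \<bar>s - t\<bar>"
proof -
  have *: "\<bar>Gf \<eta> c s - Gf \<eta> c t\<bar> \<le> 2 * \<bar>s - t\<bar>" if "t \<le> s" for s t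
  proof -
    have "0 \<le> pfun \<eta> (s - c) - pfun \<eta> (t - c)" "pfun \<eta> (s - c) - pfun \<eta> (t - c) \<le> s - t"
      using pfun_mono_lip[OF assms, of "t - c" "s - c"] that by auto
    moreover have "0 \<le> \<eta> * (s - t)" "\<eta> * (s - t) \<le> s - t" using assms that by (auto simp: mult_left_le_one_le)
    moreover have "Gf \<eta> c s - Gf \<eta> c t = (pfun \<eta> (s - c) - pfun \<eta> (t - c)) - \<eta> * (s - t)"
      unfolding Gf_def by (simp add: algebra_simps)
    ultimately show ?thesis using that by (simp add: abs_le_iff)
  qed
  show ?thesis
  proof (cases "t \<le> s")
    case True then show ?thesis using * by blast
  next
    case False then show ?thesis using *[of s t] by (simp add: abs_minus_commute)
  qed
qed

lemma Gf_incr: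
  assumes "0 < \<eta>" "\<eta> \<le> 1/2" "0 \<le> l"
  shows "Gf \<eta> c (a + l) - Gf \<eta> c a \<ge> - \<eta> * min l 1"
proof (cases "l \<le> 1")
  case True
  have "pfun \<eta> (a - c) \<le> pfun \<eta> (a + l - c)" using pfun_mono_lip[OF assms(1,2), of "a - c" "a + l - c"] assms by auto
  then show ?thesis using True unfolding Gf_def by (auto simp: algebra_simps)
next
  case False
  then show ?thesis using Gf_range[OF assms(1,2), of c "a + l"] Gf_range[OF assms(1,2), of c a] by auto
qed

lemma Gf_bump:
  assumes "0 < \<eta>" "\<eta> \<le> 1/2" "a - c \<le> of_int q" "of_int q + \<eta> \<le> a - c + l"
  shows "Gf \<eta> c (a + l) - Gf \<eta> c a \<ge> \<eta> - \<eta> * l"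
proof -
  have "pfun \<eta> (a - c) \<le> pfun \<eta> (of_int q)" using pfun_mono_lip[OF assms(1,2)] assms by auto
  moreover have "pfun \<eta> (of_int q + \<eta>) \<le> pfun \<eta> (a + l - c)" using pfun_mono_lip[OF assms(1,2)] assms by auto
  ultimately have "pfun \<eta> (a + l - c) - pfun \<eta> (a - c) \<ge> \<eta>" using pfun_int[of \<eta> q] assms by auto
  then show ?thesis unfolding Gf_def by (auto simp: algebra_simps)
qed



lemma W_lower_G:
  fixes b :: nat and \<alpha> \<delta> \<eta> c a :: real
  assumes b: "b \<ge> 2" and al: "0 < \<alpha>" "\<alpha> < 1" and eta: "0 < \<eta>" "\<eta> \<le> 1/2" and d: "0 < \<delta>"
    and q1: "real b ^ K * a - c \<le> of_int q"
    and q2: "of_int q + \<eta> \<le> real b ^ K * a - c + real b ^ K * \<delta>"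
    and l1: "real b ^ K * \<delta> \<le> 1"
    and sS: "summable (\<lambda>k. (real b powr (- \<alpha>)) ^ k * min (real b ^ k * \<delta>) 1)"
  shows "weierstrass \<alpha> b (Gf \<eta> c) (a + \<delta>) - weierstrass \<alpha> b (Gf \<eta> c) a
    \<ge> \<eta> * (real b powr (- \<alpha>)) ^ K - \<eta> * (\<Sum>k. (real b powr (- \<alpha>)) ^ k * min (real b ^ k * \<delta>) 1)"
proof -
  define B where "B = real b"
  define r where "r = B powr (- \<alpha>)"
  have B2: "B \<ge> 2" unfolding B_def using b by simp
  have r0: "0 < r" "r < 1" unfolding r_def using B2 al by (auto simp: powr_less_one)
  have bd: "\<forall>s. \<bar>Gf \<eta> c s\<bar> \<le> 1"
  proof
    fix s show "\<bar>Gf \<eta> c s\<bar> \<le> 1" using Gf_range[OF eta, of c s] eta by linarith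
  qed
  define h where "h k = r ^ k * (Gf \<eta> c (B ^ k * (a + \<delta>)) - Gf \<eta> c (B ^ k * a))" for k
  have s1: "summable (\<lambda>k. r ^ k * Gf \<eta> c (B ^ k * (a + \<delta>)))"
    using W_summable[OF b al(1) bd] unfolding r_def B_def .
  have s2: "summable (\<lambda>k. r ^ k * Gf \<eta> c (B ^ k * a))"
    using W_summable[OF b al(1) bd] unfolding r_def B_def .
  have eqh: "weierstrass \<alpha> b (Gf \<eta> c) (a + \<delta>) - weierstrass \<alpha> b (Gf \<eta> c) a = suminf h"
    unfolding W_eq[OF b] B_def[symmetric] r_def[symmetric] h_def
    using suminf_diff[OF s1 s2] by (simp add: right_diff_distrib)
  have sh: "summable h" unfolding h_def using summable_diff[OF s1 s2] by (simp add: right_diff_distrib)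
  define lo where "lo k = (if k = K then \<eta> * r ^ K else 0) - \<eta> * (r ^ k * min (B ^ k * \<delta>) 1)" for k
  have sS': "summable (\<lambda>k. r ^ k * min (B ^ k * \<delta>) 1)" using sS unfolding r_def B_def .
  have ss: "(\<lambda>k. if k = K then \<eta> * r ^ K else 0) sums (\<eta> * r ^ K)"
  proof -
    have "(\<lambda>k. if k = K then \<eta> * r ^ K else 0) = (\<lambda>k. if k = K then \<eta> * r ^ k else 0)" by auto
    then show ?thesis using sums_single[of K "\<lambda>k. \<eta> * r ^ k"] by simp
  qed
  have slo: "lo sums (\<eta> * r ^ K - \<eta> * (\<Sum>k. r ^ k * min (B ^ k * \<delta>) 1))"
    unfolding lo_def by (intro sums_diff ss sums_mult summable_sums sS')
  have le: "lo k \<le> h k" for k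
  proof -
    have split: "B ^ k * (a + \<delta>) = B ^ k * a + B ^ k * \<delta>" by (simp add: algebra_simps)
    have l0: "0 \<le> B ^ k * \<delta>" using B2 d by simp
    show ?thesis
    proof (cases "k = K")
      case True
      have "Gf \<eta> c (B ^ K * a + B ^ K * \<delta>) - Gf \<eta> c (B ^ K * a) \<ge> \<eta> - \<eta> * (B ^ K * \<delta>)"
        by (rule Gf_bump[OF eta]) (use q1 q2 in \<open>simp_all add: B_def\<close>)
      then have "\<eta> - \<eta> * min (B ^ k * \<delta>) 1 \<le> Gf \<eta> c (B ^ k * (a + \<delta>)) - Gf \<eta> c (B ^ k * a)"
        using True l1 split unfolding B_def by simp
      then have "r ^ k * (\<eta> - \<eta> * min (B ^ k * \<delta>) 1) \<le> h k" unfolding h_def using r0 by (intro mult_left_mono) auto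
      then show ?thesis unfolding lo_def using True by (simp add: algebra_simps)
    next
      case False
      have "- \<eta> * min (B ^ k * \<delta>) 1 \<le> Gf \<eta> c (B ^ k * a + B ^ k * \<delta>) - Gf \<eta> c (B ^ k * a)"
        by (rule Gf_incr[OF eta l0])
      then have "r ^ k * (- \<eta> * min (B ^ k * \<delta>) 1) \<le> h k" unfolding h_def split using r0 by (intro mult_left_mono) auto
      then show ?thesis unfolding lo_def using False by (simp add: algebra_simps)
    qed
  qed
  have "suminf lo \<le> suminf h" by (rule suminf_le[OF le]) (use slo sh in \<open>auto simp: sums_iff\<close>)
  then show ?thesis using eqh slo unfolding r_def B_def by (simp add: sums_iff)
qed

definition Tf :: "nat \<Rightarrow> real \<Rightarrow> (real \<Rightarrow> real) \<Rightarrow> real \<Rightarrow> real" where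
  "Tf b \<alpha> h z = h z - (real b powr (- \<alpha>)) * h (real b * z)"

lemma W_T:
  assumes b: "b \<ge> 2" and al: "0 < \<alpha>" and bd: "\<forall>s. \<bar>h s\<bar> \<le> Mh"
  shows "weierstrass \<alpha> b (Tf b \<alpha> h) x = h x"
proof -
  define B where "B = real b"
  define r where "r = B powr (- \<alpha>)"
  have B2: "B \<ge> 2" unfolding B_def using b by simp
  have r0: "0 < r" "r < 1" unfolding r_def using B2 al by (auto simp: powr_less_one)
  define f where "f k = r ^ k * h (B ^ k * x)" for k
  have lim: "f \<longlonglongrightarrow> 0"
  proof (rule Lim_null_comparison)
    have "norm (f k) \<le> Mh * r ^ k" for k
    proof -
      have "norm (f k) = r ^ k * \<bar>h (B ^ k * x)\<bar>" unfolding f_def using r0 by (simp add: abs_mult)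
      also have "\<dots> \<le> r ^ k * Mh" using bd r0 by (intro mult_left_mono) auto
      finally show ?thesis by (simp add: mult.commute)
    qed
    then show "\<forall>\<^sub>F k in sequentially. norm (f k) \<le> Mh * r ^ k" by simp
    show "(\<lambda>k. Mh * r ^ k) \<longlonglongrightarrow> 0" using r0 by (intro tendsto_mult_right_zero LIMSEQ_power_zero) auto
  qed
  have "(\<lambda>k. f k - f (Suc k)) sums (f 0 - 0)" by (rule telescope_sums'[OF lim])
  moreover have "(\<lambda>k. f k - f (Suc k)) = (\<lambda>k. r ^ k * Tf b \<alpha> h (B ^ k * x))"
  proof
    fix k
    have "f (Suc k) = r ^ k * (r * h (B * (B ^ k * x)))" unfolding f_def by (simp add: mult.assoc)
    then show "f k - f (Suc k) = r ^ k * Tf b \<alpha> h (B ^ k * x)"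
      unfolding Tf_def B_def[symmetric] r_def[symmetric] f_def by (simp add: right_diff_distrib)
  qed
  ultimately have "(\<lambda>k. r ^ k * Tf b \<alpha> h (B ^ k * x)) sums h x" unfolding f_def by simp
  then show ?thesis unfolding W_eq[OF b] B_def[symmetric] r_def[symmetric] by (simp add: sums_iff)
qed

lemma cos_lip0: "\<bar>cos (u::real) - cos v\<bar> \<le> \<bar>u - v\<bar>"
proof -
  have "\<bar>cos u - cos v\<bar> = 2 * (\<bar>sin ((u + v) / 2)\<bar> * \<bar>sin ((v - u) / 2)\<bar>)"
    unfolding cos_diff_cos abs_mult by simp
  also have "\<dots> \<le> 2 * (1 * \<bar>(v - u) / 2\<bar>)"
    by (intro mult_left_mono mult_mono abs_sin_x_le_abs_x abs_sin_le_one) auto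
  also have "\<dots> = \<bar>u - v\<bar>" using abs_minus_commute[of v u] by simp
  finally show ?thesis .
qed

lemma sin_lip0: "\<bar>sin (u::real) - sin v\<bar> \<le> \<bar>u - v\<bar>"
proof -
  have "\<bar>sin u - sin v\<bar> = 2 * (\<bar>sin ((u - v) / 2)\<bar> * \<bar>cos ((u + v) / 2)\<bar>)"
    unfolding sin_diff_sin abs_mult by simp
  also have "\<dots> \<le> 2 * (\<bar>(u - v) / 2\<bar> * 1)"
    by (intro mult_left_mono mult_mono abs_sin_x_le_abs_x abs_cos_le_one) auto
  also have "\<dots> = \<bar>u - v\<bar>" by simp
  finally show ?thesis .
qed

lemma twopi_abs: "\<bar>2 * pi * s - 2 * pi * t\<bar> = 2 * pi * \<bar>s - t\<bar>"
proof -
  have "2 * pi * s - 2 * pi * t = (2 * pi) * (s - t)" by (simp add: right_diff_distrib)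
  then show ?thesis by (simp add: abs_mult)
qed

lemma cos_lip: "\<bar>cos (2 * pi * s) - cos (2 * pi * t)\<bar> \<le> 2 * pi * \<bar>s - t\<bar>"
  using cos_lip0[of "2 * pi * s" "2 * pi * t"] unfolding twopi_abs .

lemma sin_lip: "\<bar>sin (2 * pi * s) - sin (2 * pi * t)\<bar> \<le> 2 * pi * \<bar>s - t\<bar>"
  using sin_lip0[of "2 * pi * s" "2 * pi * t"] unfolding twopi_abs .

lemma Tf_props:
  assumes b: "b \<ge> 2" and al: "0 < \<alpha>" and per: "one_periodic h"
    and lip: "\<forall>s t. \<bar>h s - h t\<bar> \<le> Lh * \<bar>s - t\<bar>" and bd: "\<forall>s. \<bar>h s\<bar> \<le> 1" and Lh: "Lh \<ge> 0"
  shows "one_periodic (Tf b \<alpha> h)"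
    and "\<forall>s t. \<bar>Tf b \<alpha> h s - Tf b \<alpha> h t\<bar> \<le> Lh * (1 + real b) * \<bar>s - t\<bar>"
    and "\<forall>s. \<bar>Tf b \<alpha> h s\<bar> \<le> 2"
proof -
  define B where "B = real b"
  define r where "r = B powr (- \<alpha>)"
  have B2: "B \<ge> 2" unfolding B_def using b by simp
  have r0: "0 < r" "r < 1" unfolding r_def using B2 al by (auto simp: powr_less_one)
  have T: "Tf b \<alpha> h z = h z - r * h (B * z)" for z unfolding Tf_def r_def B_def by simp
  show "one_periodic (Tf b \<alpha> h)" unfolding one_periodic_def T
  proof
    fix x
    have "h (B * (x + 1)) = h (B * x + real b)" by (simp add: B_def algebra_simps)
    also have "\<dots> = h (B * x)" by (rule per_nat[OF per])
    finally show "h (x + 1) - r * h (B * (x + 1)) = h x - r * h (B * x)"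
      using per unfolding one_periodic_def by simp
  qed
  show "\<forall>s t. \<bar>Tf b \<alpha> h s - Tf b \<alpha> h t\<bar> \<le> Lh * (1 + real b) * \<bar>s - t\<bar>"
  proof (intro allI)
    fix s t
    have "\<bar>Tf b \<alpha> h s - Tf b \<alpha> h t\<bar> \<le> \<bar>h s - h t\<bar> + r * \<bar>h (B * s) - h (B * t)\<bar>"
    proof -
      have eq: "Tf b \<alpha> h s - Tf b \<alpha> h t = (h s - h t) - r * (h (B * s) - h (B * t))"
        unfolding T by (simp add: algebra_simps)
      show ?thesis unfolding eq using abs_triangle_ineq4[of "h s - h t" "r * (h (B * s) - h (B * t))"] r0
        by (simp add: abs_mult)
    qed
    also have "\<dots> \<le> Lh * \<bar>s - t\<bar> + 1 * (Lh * \<bar>B * s - B * t\<bar>)"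
    proof -
      have A: "\<bar>h s - h t\<bar> \<le> Lh * \<bar>s - t\<bar>" using lip by blast
      have C0: "\<bar>h (B * s) - h (B * t)\<bar> \<le> Lh * \<bar>B * s - B * t\<bar>" using lip by blast
      have "r * \<bar>h (B * s) - h (B * t)\<bar> \<le> 1 * \<bar>h (B * s) - h (B * t)\<bar>"
        using r0 by (intro mult_right_mono) auto
      then show ?thesis using A C0 by linarith
    qed
    also have "\<dots> = Lh * (1 + B) * \<bar>s - t\<bar>"
    proof -
      have "B * s - B * t = B * (s - t)" by (simp add: right_diff_distrib)
      then have "\<bar>B * s - B * t\<bar> = B * \<bar>s - t\<bar>" using B2 by (simp add: abs_mult)
      then show ?thesis by (simp add: algebra_simps)
    qed
    finally show "\<bar>Tf b \<alpha> h s - Tf b \<alpha> h t\<bar> \<le> Lh * (1 + real b) * \<bar>s - t\<bar>" unfolding B_def .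
  qed
  show "\<forall>s. \<bar>Tf b \<alpha> h s\<bar> \<le> 2"
  proof
    fix s
    have "\<bar>Tf b \<alpha> h s\<bar> \<le> \<bar>h s\<bar> + r * \<bar>h (B * s)\<bar>" unfolding T using r0 abs_triangle_ineq4[of "h s" "r * h (B * s)"]
      by (simp add: abs_mult)
    moreover have "r * \<bar>h (B * s)\<bar> \<le> 1" using bd r0 by (intro mult_le_one) auto
    moreover have "\<bar>h s\<bar> \<le> 1" using bd by blast
    ultimately show "\<bar>Tf b \<alpha> h s\<bar> \<le> 2" by linarith
  qed
qed



lemma trig_lower:
  fixes a \<delta> \<delta>0 :: real
  assumes "0 < \<delta>0" "\<delta>0 \<le> \<delta>" "\<delta> \<le> 1/2"
  shows "1 - cos (2 * pi * \<delta>0) \<le> \<bar>cos (2 * pi * (a + \<delta>)) - cos (2 * pi * a)\<bar> + \<bar>sin (2 * pi * (a + \<delta>)) - sin (2 * pi * a)\<bar>"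
proof -
  define s where "s = 2 * pi * (a + \<delta>)"
  define t where "t = 2 * pi * a"
  define d1 where "d1 = cos s - cos t"
  define d2 where "d2 = sin s - sin t"
  have "d1^2 + d2^2 = 2 - 2 * (cos s * cos t + sin s * sin t)"
    unfolding d1_def d2_def power2_eq_square using sin_cos_squared_add3[of s] sin_cos_squared_add3[of t]
    by (simp add: algebra_simps)
  also have "\<dots> = 2 - 2 * cos (2 * pi * \<delta>)" unfolding cos_diff[symmetric] s_def t_def by (simp add: algebra_simps)
  finally have sq: "d1^2 + d2^2 = 2 - 2 * cos (2 * pi * \<delta>)" .
  have "cos (2 * pi * \<delta>) \<le> cos (2 * pi * \<delta>0)"
    using assms by (subst cos_mono_le_eq) auto
  then have sq2: "2 * (1 - cos (2 * pi * \<delta>0)) \<le> d1^2 + d2^2" using sq by simp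
  have b1: "\<bar>d1\<bar> \<le> 2" unfolding d1_def using abs_triangle_ineq4[of "cos s" "cos t"] abs_cos_le_one[of s] abs_cos_le_one[of t] by linarith
  have b2: "\<bar>d2\<bar> \<le> 2" unfolding d2_def using abs_triangle_ineq4[of "sin s" "sin t"] abs_sin_le_one[of s] abs_sin_le_one[of t] by linarith
  have sqa: "z^2 \<le> 2 * \<bar>z\<bar>" if "\<bar>z\<bar> \<le> 2" for z :: real
  proof -
    have "z^2 = \<bar>z\<bar> * \<bar>z\<bar>" by (simp add: power2_eq_square)
    also have "\<dots> \<le> 2 * \<bar>z\<bar>" using that by (intro mult_right_mono) auto
    finally show ?thesis .
  qed
  have "d1^2 \<le> 2 * \<bar>d1\<bar>" using sqa[OF b1] .
  moreover have "d2^2 \<le> 2 * \<bar>d2\<bar>" using sqa[OF b2] .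
  ultimately have "2 * (1 - cos (2 * pi * \<delta>0)) \<le> 2 * (\<bar>d1\<bar> + \<bar>d2\<bar>)" using sq2 by (simp add: algebra_simps)
  then have "1 - cos (2 * pi * \<delta>0) \<le> \<bar>d1\<bar> + \<bar>d2\<bar>" by simp
  then show ?thesis unfolding d1_def d2_def s_def t_def .
qed

lemma linf_ge:
  assumes "i < d"
  shows "\<bar>u i - v i\<bar> \<le> linf_dist d u v"
  unfolding linf_dist_def using assms by (intro Max_ge) auto

lemma linf_le:
  assumes "\<And>i. i < d \<Longrightarrow> \<bar>u i - v i\<bar> \<le> C" "0 \<le> C"
  shows "linf_dist d u v \<le> C"
  unfolding linf_dist_def using assms by (subst Max_le_iff) auto

theorem theorem2p1:
  fixes b :: nat and \<alpha> :: real
  assumes "b \<ge> 2" and "0 < \<alpha>" and "\<alpha> < 1"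
  shows "\<exists>(d::nat) (gs :: nat \<Rightarrow> real \<Rightarrow> real).
           (\<forall>i<d. circle_lipschitz (gs i)) \<and>
           (\<exists>c1 c2. c1 > 0 \<and> c2 > 0 \<and>
              (\<forall>x y. 0 \<le> x \<and> x < 1 \<and> 0 \<le> y \<and> y < 1 \<longrightarrow>
                 c1 * circle_dist x y powr \<alpha>
                   \<le> linf_dist d (weierstrass_embedding \<alpha> b d gs x) (weierstrass_embedding \<alpha> b d gs y) \<and>
                 linf_dist d (weierstrass_embedding \<alpha> b d gs x) (weierstrass_embedding \<alpha> b d gs y)
                   \<le> c2 * circle_dist x y powr \<alpha>))"
proof -
  note b = assms(1) and al = assms(2,3)
  define B where "B = real b"
  define r where "r = B powr (- \<alpha>)"
  define C0 where "C0 = B / (r * B - 1) + 1 / (1 - r)"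
  have B2: "B \<ge> 2" unfolding B_def using b by simp
  have r0: "0 < r" "r < 1" unfolding r_def using B2 al by (auto simp: powr_less_one)
  have rB1: "r * B > 1" unfolding r_def using B2 al powr_less_mono[of 0 "1 - \<alpha>" B]
    by (simp add: powr_diff powr_minus_divide)
  have C0p: "C0 > 0" unfolding C0_def using rB1 r0 B2 by (intro add_pos_pos) auto
  obtain M0 where M0: "r ^ M0 < 1 / (2 * C0)" using real_arch_pow_inv[of "1 / (2 * C0)" r] C0p r0 by auto
  define M where "M = Suc M0"
  have M1: "M \<ge> 1" unfolding M_def by simp
  have rM: "r ^ M \<le> r ^ M0" unfolding M_def using r0 by (intro power_decreasing) auto
  have C0rM: "C0 * r ^ M \<le> 1/2"
  proof -
    have "C0 * r ^ M \<le> C0 * (1 / (2 * C0))" using rM M0 C0p by (intro mult_left_mono) auto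
    then show ?thesis using C0p by simp
  qed
  define Ng where "Ng = 2 * b ^ M"
  define \<eta> where "\<eta> = 1 / real Ng"
  have BM: "B ^ M \<ge> 2"
  proof -
    have "B ^ 1 \<le> B ^ M" using B2 M1 by (intro power_increasing) auto
    then show ?thesis using B2 by simp
  qed
  have Ngr: "real Ng = 2 * B ^ M" unfolding Ng_def B_def by simp
  have eta0: "0 < \<eta>" "\<eta> \<le> 1/4" unfolding \<eta>_def Ngr using BM by (auto simp: field_simps)
  have eta2: "\<eta> \<le> 1/2" using eta0 by simp
  have etaNg: "\<eta> * real Ng = 1" unfolding \<eta>_def using BM Ngr B2 by simp
  have etaBM: "2 * \<eta> = 1 / B ^ M" unfolding \<eta>_def Ngr by simp
  define hc where "hc z = cos (2 * pi * z)" for z :: real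
  define hs where "hs z = sin (2 * pi * z)" for z :: real
  define gs where "gs i = (if i = 0 then Tf b \<alpha> hc else if i = 1 then Tf b \<alpha> hs
     else Gf \<eta> (real (i - 2) * \<eta>))" for i
  define d where "d = Ng + 2"
  define Lc where "Lc = 2 * pi * (1 + B)"
  have Lc2: "Lc \<ge> 2" unfolding Lc_def using B2 pi_gt3 by (simp add: algebra_simps) (smt (verit) mult_nonneg_nonneg pi_ge_zero)
  have hc_per: "one_periodic hc" unfolding one_periodic_def hc_def by (simp add: distrib_left cos_periodic)
  have hs_per: "one_periodic hs" unfolding one_periodic_def hs_def by (simp add: distrib_left sin_periodic)
  have hc_lip: "\<forall>s t. \<bar>hc s - hc t\<bar> \<le> (2 * pi) * \<bar>s - t\<bar>" unfolding hc_def using cos_lip by simp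
  have hs_lip: "\<forall>s t. \<bar>hs s - hs t\<bar> \<le> (2 * pi) * \<bar>s - t\<bar>" unfolding hs_def using sin_lip by simp
  have hc_bd: "\<forall>s. \<bar>hc s\<bar> \<le> 1" unfolding hc_def by simp
  have hs_bd: "\<forall>s. \<bar>hs s\<bar> \<le> 1" unfolding hs_def by simp
  note Tc = Tf_props[OF b al(1) hc_per hc_lip hc_bd]
  note Ts = Tf_props[OF b al(1) hs_per hs_lip hs_bd]
  have props: "one_periodic (gs i) \<and> (\<forall>s t. \<bar>gs i s - gs i t\<bar> \<le> Lc * \<bar>s - t\<bar>) \<and> (\<forall>s. \<bar>gs i s\<bar> \<le> 2)" for i
  proof (cases "i = 0")
    case True then show ?thesis using Tc unfolding gs_def Lc_def B_def by (simp add: mult.assoc)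
  next
    case F0: False
    show ?thesis
    proof (cases "i = 1")
      case True then show ?thesis using Ts F0 unfolding gs_def Lc_def B_def by (simp add: mult.assoc)
    next
      case False
      then have g: "gs i = Gf \<eta> (real (i - 2) * \<eta>)" using F0 unfolding gs_def by simp
      have "\<bar>gs i s - gs i t\<bar> \<le> Lc * \<bar>s - t\<bar>" for s t
      proof -
        have "\<bar>gs i s - gs i t\<bar> \<le> 2 * \<bar>s - t\<bar>" unfolding g by (rule Gf_lip[OF eta0(1) eta2])
        also have "\<dots> \<le> Lc * \<bar>s - t\<bar>" using Lc2 by (intro mult_right_mono) auto
        finally show ?thesis .
      qed
      moreover have "\<bar>gs i s\<bar> \<le> 2" for s using Gf_range[OF eta0(1) eta2, of "real (i - 2) * \<eta>" s] eta2 unfolding g by linarith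
      ultimately show ?thesis unfolding g using Gf_periodic by auto
    qed
  qed
  have Wper: "one_periodic (weierstrass \<alpha> b (gs i))" for i
    unfolding one_periodic_def using W_periodic props by blast
  have lipU: "circle_lipschitz (gs i)" for i
    unfolding circle_lipschitz_def
  proof (intro conjI exI)
    show "one_periodic (gs i)" using props by blast
    show "Lc-lipschitz_on UNIV (gs i)" using props Lc2 by (intro lipschitz_onI) (auto simp: dist_real_def)
  qed
  define e where "e = 1 - cos (2 * pi * (2 * \<eta>))"
  have e0: "e > 0"
  proof -
    have "cos (2 * pi * (2 * \<eta>)) < cos 0"
      using eta0 pi_gt_zero by (intro cos_monotone_0_pi) (auto simp: field_simps)
    then show ?thesis unfolding e_def by simp
  qed
  define c1 where "c1 = min (e / 2) (\<eta> * r / 2)"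
  define c2 where "c2 = (Lc + 2 * 2) * C0"
  have c1p: "c1 > 0" unfolding c1_def using e0 eta0 r0 by simp
  have c2p: "c2 > 0" unfolding c2_def using Lc2 C0p by simp
  have emb: "weierstrass_embedding \<alpha> b d gs z i = weierstrass \<alpha> b (gs i) z" if "i < d" for z i
    unfolding weierstrass_embedding_def using that by simp
  have main: "c1 * circle_dist x y powr \<alpha>
      \<le> linf_dist d (weierstrass_embedding \<alpha> b d gs x) (weierstrass_embedding \<alpha> b d gs y) \<and>
    linf_dist d (weierstrass_embedding \<alpha> b d gs x) (weierstrass_embedding \<alpha> b d gs y)
      \<le> c2 * circle_dist x y powr \<alpha>"
    if xy: "0 \<le> x" "x < 1" "0 \<le> y" "y < 1" for x y
  proof (cases "x = y")
    case True
    have cd0: "circle_dist x y = 0" unfolding circle_dist_def True by simp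
    have l0: "linf_dist d (weierstrass_embedding \<alpha> b d gs x) (weierstrass_embedding \<alpha> b d gs y) = 0"
    proof -
      have "linf_dist d (weierstrass_embedding \<alpha> b d gs x) (weierstrass_embedding \<alpha> b d gs y) \<le> 0"
        using True by (intro linf_le) auto
      moreover have "linf_dist d (weierstrass_embedding \<alpha> b d gs x) (weierstrass_embedding \<alpha> b d gs y) \<ge> 0"
        unfolding linf_dist_def by (intro Max_ge) auto
      ultimately show ?thesis by simp
    qed
    show ?thesis unfolding cd0 l0 by simp
  next
    case False
    define \<delta> where "\<delta> = circle_dist x y"
    obtain a where d0: "0 < \<delta>" "\<delta> \<le> 1/2"
      and aF: "\<And>F. one_periodic F \<Longrightarrow> \<bar>F x - F y\<bar> = \<bar>F (a + \<delta>) - F a\<bar>"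
      using lifts[OF xy False] unfolding \<delta>_def by blast
    have D: "\<bar>weierstrass_embedding \<alpha> b d gs x i - weierstrass_embedding \<alpha> b d gs y i\<bar>
        = \<bar>weierstrass \<alpha> b (gs i) (a + \<delta>) - weierstrass \<alpha> b (gs i) a\<bar>" if "i < d" for i
      using emb[OF that] aF[OF Wper] by simp
    have dpow1: "\<delta> powr \<alpha> \<le> 1" using d0 al by (intro powr_le1) auto
    have upper: "linf_dist d (weierstrass_embedding \<alpha> b d gs x) (weierstrass_embedding \<alpha> b d gs y)
        \<le> c2 * \<delta> powr \<alpha>"
    proof (rule linf_le)
      fix i assume i: "i < d"
      have "\<bar>weierstrass \<alpha> b (gs i) (a + \<delta>) - weierstrass \<alpha> b (gs i) a\<bar> \<le> (Lc + 2 * 2) * (C0 * \<delta> powr \<alpha>)"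
        using W_upper[OF b al d0(1) _ _, of Lc "gs i" 2 a] d0 Lc2 props[of i]
        unfolding C0_def r_def B_def by auto
      then show "\<bar>weierstrass_embedding \<alpha> b d gs x i - weierstrass_embedding \<alpha> b d gs y i\<bar> \<le> c2 * \<delta> powr \<alpha>"
        unfolding D[OF i] c2_def by (simp add: mult.assoc)
    next
      show "0 \<le> c2 * \<delta> powr \<alpha>" using c2p by simp
    qed
    have lower: "\<exists>i<d. c1 * \<delta> powr \<alpha> \<le> \<bar>weierstrass \<alpha> b (gs i) (a + \<delta>) - weierstrass \<alpha> b (gs i) a\<bar>"
    proof -
      obtain N where N: "N > 0" "1 \<le> B ^ N * \<delta>" "B ^ (N - 1) * \<delta> < 1"
        using N_exists[of B \<delta>] B2 d0 by auto
      show ?thesis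
      proof (cases "N \<le> M")
        case True
        have "B ^ N \<le> B ^ M" using True B2 by (intro power_increasing) auto
        then have "1 / B ^ M \<le> 1 / B ^ N" using B2 by (intro divide_left_mono) auto
        also have "1 / B ^ N \<le> \<delta>" using N(2) B2 by (simp add: field_simps)
        finally have dge: "2 * \<eta> \<le> \<delta>" using etaBM by simp
        have W0: "weierstrass \<alpha> b (gs 0) z = hc z" for z unfolding gs_def using W_T[OF b al(1) hc_bd] by simp
        have W1: "weierstrass \<alpha> b (gs 1) z = hs z" for z unfolding gs_def using W_T[OF b al(1) hs_bd] by simp
        have "e \<le> \<bar>hc (a + \<delta>) - hc a\<bar> + \<bar>hs (a + \<delta>) - hs a\<bar>"
          unfolding e_def hc_def hs_def by (rule trig_lower) (use eta0 dge d0 in auto)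
        then have "e / 2 \<le> \<bar>hc (a + \<delta>) - hc a\<bar> \<or> e / 2 \<le> \<bar>hs (a + \<delta>) - hs a\<bar>" by linarith
        moreover have "c1 * \<delta> powr \<alpha> \<le> e / 2"
        proof -
          have "c1 * \<delta> powr \<alpha> \<le> c1 * 1" using dpow1 c1p by (intro mult_left_mono) auto
          then show ?thesis unfolding c1_def by simp
        qed
        moreover have "0 < d" "1 < d" unfolding d_def by auto
        ultimately show ?thesis
        proof (elim disjE)
          assume h: "e / 2 \<le> \<bar>hc (a + \<delta>) - hc a\<bar>" and c: "c1 * \<delta> powr \<alpha> \<le> e / 2" and dd: "0 < d"
          show ?thesis by (rule exI[of _ 0]) (use h c dd W0 in auto)
        next
          assume h: "e / 2 \<le> \<bar>hs (a + \<delta>) - hs a\<bar>" and c: "c1 * \<delta> powr \<alpha> \<le> e / 2" and dd: "1 < d"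
          show ?thesis by (rule exI[of _ 1]) (use h c dd W1 in auto)
        qed
      next
        case False
        define K where "K = N - M"
        have KM: "K + M = N" unfolding K_def using False by simp
        define l where "l = B ^ K * \<delta>"
        have l_ge: "2 * \<eta> \<le> l"
        proof -
          have "B ^ N = B ^ K * B ^ M" unfolding KM[symmetric] by (simp add: power_add)
          then have "1 \<le> B ^ M * l" unfolding l_def using N(2) by (simp add: algebra_simps)
          then have "1 / B ^ M \<le> l" using B2 by (simp add: field_simps)
          then show ?thesis using etaBM by simp
        qed
        have l_le: "l \<le> 1"
        proof -
          have "B ^ K \<le> B ^ (N - 1)" using KM M1 B2 by (intro power_increasing) auto
          then have "l \<le> B ^ (N - 1) * \<delta>" unfolding l_def using d0 by (intro mult_right_mono) auto
          then show ?thesis using N(3) by simp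
        qed
        define A where "A = B ^ K * a"
        define ci where "ci = \<lceil>A / \<eta>\<rceil>"
        define m where "m = ci mod int Ng"
        define q where "q = ci div int Ng"
        have Ngpos: "int Ng > 0" unfolding Ng_def using b by simp
        have m0: "0 \<le> m" "m < int Ng" unfolding m_def using Ngpos by auto
        have ciq: "ci = q * int Ng + m" unfolding m_def q_def by simp
        have cieta: "real_of_int ci * \<eta> = real_of_int q + real_of_int m * \<eta>"
        proof -
          have "real_of_int ci * \<eta> = real_of_int q * (\<eta> * real Ng) + real_of_int m * \<eta>"
            unfolding ciq by (simp add: algebra_simps)
          then show ?thesis using etaNg by simp
        qed
        have c_ge: "A \<le> real_of_int ci * \<eta>"
        proof -
          have "A / \<eta> \<le> real_of_int ci" unfolding ci_def by simp
          then show ?thesis using eta0 by (simp add: field_simps)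
        qed
        have c_lt: "real_of_int ci * \<eta> < A + \<eta>"
        proof -
          have "real_of_int ci < A / \<eta> + 1" unfolding ci_def by linarith
          then have "real_of_int ci * \<eta> < (A / \<eta> + 1) * \<eta>" using eta0 by (intro mult_strict_right_mono) auto
          also have "(A / \<eta> + 1) * \<eta> = A + \<eta>" using eta0 by (simp add: distrib_right)
          finally show ?thesis .
        qed
        define i where "i = nat m + 2"
        have id: "i < d" unfolding i_def d_def using m0 by linarith
        have gi: "gs i = Gf \<eta> (real_of_int m * \<eta>)" unfolding gs_def i_def using m0 by simp
        have q1: "B ^ K * a - real_of_int m * \<eta> \<le> of_int q" using c_ge cieta unfolding A_def by linarith
        have q2: "of_int q + \<eta> \<le> B ^ K * a - real_of_int m * \<eta> + B ^ K * \<delta>"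
          using c_lt cieta l_ge unfolding A_def l_def by linarith
        note S = S_bound[OF B2 al d0(1) N, folded r_def]
        have lowG: "weierstrass \<alpha> b (gs i) (a + \<delta>) - weierstrass \<alpha> b (gs i) a
            \<ge> \<eta> * r ^ K - \<eta> * (\<Sum>k. r ^ k * min (B ^ k * \<delta>) 1)"
          unfolding gi r_def B_def
          by (rule W_lower_G[OF b al eta0(1) eta2 d0(1)]) (use q1 q2 l_le S(1) in \<open>simp_all add: B_def l_def r_def\<close>)
        have "\<eta> * (\<Sum>k. r ^ k * min (B ^ k * \<delta>) 1) \<le> \<eta> * (C0 * r ^ N)"
          using S(2) eta0 unfolding C0_def by (intro mult_left_mono) (auto simp: mult.commute)
        also have "\<dots> = \<eta> * r ^ K * (C0 * r ^ M)" unfolding KM[symmetric] by (simp add: power_add algebra_simps)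
        also have "\<dots> \<le> \<eta> * r ^ K * (1/2)" using C0rM eta0 r0 by (intro mult_left_mono) auto
        finally have "\<eta> * r ^ K / 2 \<le> weierstrass \<alpha> b (gs i) (a + \<delta>) - weierstrass \<alpha> b (gs i) a"
          using lowG by linarith
        moreover have "c1 * \<delta> powr \<alpha> \<le> \<eta> * r ^ K / 2"
        proof -
          have "\<delta> powr \<alpha> \<le> r ^ (N - 1)" unfolding r_def
            by (rule rN_ge) (use B2 al N d0 in \<open>auto simp: field_simps\<close>)
          then have "r * \<delta> powr \<alpha> \<le> r ^ N" using r0 N(1)
            by (metis Suc_diff_1 mult_left_mono power_Suc less_imp_le)
          also have "r ^ N \<le> r ^ K" using KM r0 by (intro power_decreasing) auto
          finally have "r * \<delta> powr \<alpha> \<le> r ^ K" .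
          then have "\<eta> * r / 2 * \<delta> powr \<alpha> \<le> \<eta> * r ^ K / 2" using eta0 by (simp add: mult.assoc mult_left_mono)
          moreover have "c1 * \<delta> powr \<alpha> \<le> \<eta> * r / 2 * \<delta> powr \<alpha>" unfolding c1_def by (intro mult_right_mono) auto
          ultimately show ?thesis by linarith
        qed
        ultimately have "c1 * \<delta> powr \<alpha> \<le> \<bar>weierstrass \<alpha> b (gs i) (a + \<delta>) - weierstrass \<alpha> b (gs i) a\<bar>" by linarith
        then show ?thesis using id by blast
      qed
    qed
    then obtain i where i: "i < d" "c1 * \<delta> powr \<alpha> \<le> \<bar>weierstrass \<alpha> b (gs i) (a + \<delta>) - weierstrass \<alpha> b (gs i) a\<bar>" by blast
    have "c1 * \<delta> powr \<alpha> \<le> linf_dist d (weierstrass_embedding \<alpha> b d gs x) (weierstrass_embedding \<alpha> b d gs y)"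
      using i(2) linf_ge[OF i(1), of "weierstrass_embedding \<alpha> b d gs x" "weierstrass_embedding \<alpha> b d gs y"] D[OF i(1)] by linarith
    then show ?thesis using upper unfolding \<delta>_def by simp
  qed
  show ?thesis
  proof (rule exI[of _ d], rule exI[of _ gs], rule conjI)
    show "\<forall>i<d. circle_lipschitz (gs i)" using lipU by blast
    show "\<exists>c1 c2. c1 > 0 \<and> c2 > 0 \<and>
              (\<forall>x y. 0 \<le> x \<and> x < 1 \<and> 0 \<le> y \<and> y < 1 \<longrightarrow>
                 c1 * circle_dist x y powr \<alpha>
                   \<le> linf_dist d (weierstrass_embedding \<alpha> b d gs x) (weierstrass_embedding \<alpha> b d gs y) \<and>
                 linf_dist d (weierstrass_embedding \<alpha> b d gs x) (weierstrass_embedding \<alpha> b d gs y)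
                   \<le> c2 * circle_dist x y powr \<alpha>)"
      using c1p c2p main by blast
  qed
qed


end
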